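(* Let $n\geq 3$ and, for $1\leq i\leq\lfloor n/2\rfloor$, let $G_i$ be the graph obtained from $K_n$ by deleting $i$ pairwise disjoint edges (equivalently, by successively deleting $i$ edges each joining two saturated vertices). Let $g:A\to B$ be a constant function with value $w\in B$, and let $F_{G_i}$ be the corresponding functigraph of $G_i$. Then: (i) if $1\leq i\leq\lfloor n/2\rfloor-1$, then $fix(F_{G_i})=2n-2i-3$; (ii) if $n$ is even and $i=n/2$, then $fix(F_{G_i})=n-1$; (iii) if $n$ is odd and $i=\lfloor n/2\rfloor$, then $fix(F_{G_i})=2\lfloor n/2\rfloor$ when $w$ is the unique saturated vertex of $G_2$ (the copy of $G_i$ on $B$), and $fix(F_{G_i})=2\lfloor n/2\rfloor-1$ otherwise.
   Context: A vertex of a graph is saturated if it is adjacent to all other vertices. A set $S\subseteq V(H)$ is a fixing set of a graph $H$ if the only automorphism of $H$ fixing every vertex of $S$ is the identity; $fix(H)$ is the minimum cardinality of a fixing set of $H$. Functigraph: let $G_1,G_2$ be disjoint copies of a connected graph $G$, with $A=V(G_1)$, $B=V(G_2)$, and let $g:A\to B$ be a function. The functigraph $F_G$ has vertex set $A\cup B$ and edge set $E(G_1)\cup E(G_2)\cup\{ug(u):u\in A\}$. *)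

theory Defs
  imports Main
begin

text \<open>A graph is given by a finite vertex set V and a symmetric irreflexive
adjacency relation E (only its restriction to V matters).\<close>

definition saturated :: "'a set \<Rightarrow> ('a \<Rightarrow> 'a \<Rightarrow> bool) \<Rightarrow> 'a \<Rightarrow> bool" where
  "saturated V E v \<longleftrightarrow> v \<in> V \<and> (\<forall>u\<in>V. u \<noteq> v \<longrightarrow> E v u)"

definition is_aut :: "'a set \<Rightarrow> ('a \<Rightarrow> 'a \<Rightarrow> bool) \<Rightarrow> ('a \<Rightarrow> 'a) \<Rightarrow> bool" where
  "is_aut V E f \<longleftrightarrow> bij_betw f V V \<and> (\<forall>u\<in>V. \<forall>v\<in>V. E u v \<longleftrightarrow> E (f u) (f v))"

definition fixing_set :: "'a set \<Rightarrow> ('a \<Rightarrow> 'a \<Rightarrow> bool) \<Rightarrow> 'a set \<Rightarrow> bool" where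
  "fixing_set V E S \<longleftrightarrow> S \<subseteq> V \<and>
     (\<forall>f. is_aut V E f \<and> (\<forall>s\<in>S. f s = s) \<longrightarrow> (\<forall>v\<in>V. f v = v))"

definition fix_num :: "'a set \<Rightarrow> ('a \<Rightarrow> 'a \<Rightarrow> bool) \<Rightarrow> nat" where
  "fix_num V E = (LEAST k. \<exists>S. fixing_set V E S \<and> card S = k)"

text \<open>Functigraph: A = Inl ` V (copy G1), B = Inr ` V (copy G2), g : V \<Rightarrow> V
  encodes the function A \<rightarrow> B via Inl u \<mapsto> Inr (g u).\<close>

definition functigraph_V :: "'a set \<Rightarrow> ('a + 'a) set" where
  "functigraph_V V = Inl ` V \<union> Inr ` V"

fun functigraph_E :: "('a \<Rightarrow> 'a \<Rightarrow> bool) \<Rightarrow> ('a \<Rightarrow> 'a) \<Rightarrow> ('a + 'a) \<Rightarrow> ('a + 'a) \<Rightarrow> bool" where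
  "functigraph_E E g (Inl u) (Inl v) = E u v"
| "functigraph_E E g (Inr u) (Inr v) = E u v"
| "functigraph_E E g (Inl u) (Inr v) = (v = g u)"
| "functigraph_E E g (Inr v) (Inl u) = (v = g u)"

text \<open>K_n on {0..<n} minus a set M of edges.\<close>

definition Kn_minus :: "nat set set \<Rightarrow> nat \<Rightarrow> nat \<Rightarrow> bool" where
  "Kn_minus M u v \<longleftrightarrow> u \<noteq> v \<and> {u, v} \<notin> M"

definition matching_in_Kn :: "nat \<Rightarrow> nat set set \<Rightarrow> bool" where
  "matching_in_Kn n M \<longleftrightarrow> (\<forall>e\<in>M. e \<subseteq> {0..<n} \<and> card e = 2) \<and>
     (\<forall>e\<in>M. \<forall>e'\<in>M. e \<noteq> e' \<longrightarrow> e \<inter> e' = {})"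

end

theory Submission
  imports Defs
begin


lemma match_edge:
  assumes "matching_in_Kn n M" "e \<in> M"
  shows "\<exists>a b. e = {a,b} \<and> a \<noteq> b \<and> a < n \<and> b < n"
proof -
  have s: "e \<subseteq> {0..<n}" and c: "card e = 2" using assms unfolding matching_in_Kn_def by auto
  from c obtain a b where "e = {a,b}" "a \<noteq> b" by (meson card_2_iff)
  with s show ?thesis by auto
qed

lemma match_share:
  assumes "matching_in_Kn n M" "e \<in> M" "e' \<in> M" "x \<in> e" "x \<in> e'"
  shows "e = e'"
  using assms unfolding matching_in_Kn_def by blast

lemma match_ne:
  assumes "matching_in_Kn n M" "{x,y} \<in> M" shows "x \<noteq> y"
  using assms unfolding matching_in_Kn_def by fastforce

lemma pattern_id:
  assumes mat: "matching_in_Kn n M"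
    and R: "R \<subseteq> {0..<n}"
    and meet: "\<forall>e\<in>M. e \<inter> R \<noteq> {}"
    and sat: "\<forall>x\<in>{0..<n}-\<Union>M. \<forall>y\<in>{0..<n}-\<Union>M. x\<notin>R \<longrightarrow> y\<notin>R \<longrightarrow> x=y"
    and phiV: "\<forall>u\<in>{0..<n}. \<phi> u \<in> {0..<n}"
    and inj: "inj_on \<phi> {0..<n}"
    and adj: "\<forall>u\<in>{0..<n}. \<forall>v\<in>{0..<n}. Kn_minus M u v \<longleftrightarrow> Kn_minus M (\<phi> u) (\<phi> v)"
    and fixR: "\<forall>r\<in>R. \<phi> r = r"
  shows "\<forall>u\<in>{0..<n}. \<phi> u = u"
proof
  fix x assume xV: "x \<in> {0..<n}"
  show "\<phi> x = x"
  proof (cases "x \<in> R")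
    case True then show ?thesis using fixR by auto
  next
    case xR: False
    define y where "y = \<phi> x"
    have yV: "y \<in> {0..<n}" using phiV xV y_def by auto
    have yR: "y \<notin> R"
    proof
      assume "y \<in> R"
      then have "\<phi> y = y" using fixR by auto
      then have "\<phi> y = \<phi> x" using y_def by simp
      then have "y = x" using inj \<open>y \<in> R\<close> R xV inj_on_def by (metis subsetD)
      then show False using xR \<open>y \<in> R\<close> by simp
    qed
    have Q: "\<forall>r\<in>R. ({x,r} \<in> M) = ({y,r} \<in> M)"
    proof
      fix r assume r: "r \<in> R"
      have "Kn_minus M x r = Kn_minus M y r" using adj xV r R fixR y_def by (metis subsetD)
      moreover have "x \<noteq> r" "y \<noteq> r" using xR yR r by auto
      ultimately show "({x,r} \<in> M) = ({y,r} \<in> M)" unfolding Kn_minus_def by auto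
    qed
    have part: "\<exists>p\<in>R. {z,p} \<in> M" if zR: "z \<notin> R" and zM: "z \<in> \<Union>M" for z
    proof -
      obtain e where e: "e \<in> M" "z \<in> e" using zM by blast
      obtain a b where ab: "e = {a,b}" "a \<noteq> b" using match_edge[OF mat e(1)] by auto
      obtain r where r: "r \<in> e" "r \<in> R" using meet e(1) by auto
      have "r \<noteq> z" using r zR by auto
      then have "e = {z,r}" using ab e r by auto
      then show ?thesis using r e by auto
    qed
    have nopart: "\<forall>p. {z,p} \<notin> M" if "z \<notin> \<Union>M" for z
      using that by auto
    show ?thesis
    proof (cases "x \<in> \<Union>M")
      case True
      then obtain p where p: "p \<in> R" "{x,p} \<in> M" using part xR by auto
      then have "{y,p} \<in> M" using Q by auto
      then have "{x,p} = {y,p}" using match_share[OF mat p(2) \<open>{y,p}\<in>M\<close>, of p] by auto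
      moreover have "x \<noteq> p" using p xR by auto
      ultimately show ?thesis unfolding y_def by (metis doubleton_eq_iff)
    next
      case False
      have "y \<notin> \<Union>M"
      proof
        assume "y \<in> \<Union>M"
        then obtain p where p: "p \<in> R" "{y,p} \<in> M" using part yR by auto
        then have "{x,p} \<in> M" using Q by auto
        then show False using False by auto
      qed
      then show ?thesis using sat xV yV xR yR False y_def by auto
    qed
  qed
qed

lemma count_lb:
  assumes finX: "finite X" and meet: "\<forall>e\<in>M. e \<inter> X \<noteq> {}"
    and disj: "\<forall>e\<in>M. \<forall>e'\<in>M. e \<noteq> e' \<longrightarrow> e \<inter> e' = {}"
    and finM: "finite M" and QM: "Q \<inter> \<Union>M = {}" and finQ: "finite Q"
    and Qc: "\<forall>x\<in>Q. \<forall>y\<in>Q. x \<noteq> y \<longrightarrow> x \<in> X \<or> y \<in> X"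
  shows "card M + (card Q - 1) \<le> card X"
proof -
  define c where "c e = (SOME x. x \<in> e \<inter> X)" for e
  have c: "c e \<in> e \<inter> X" if "e \<in> M" for e
    unfolding c_def using meet that by (metis ex_in_conv someI_ex)
  have injc: "inj_on c M"
  proof (rule inj_onI)
    fix e e' assume "e \<in> M" "e' \<in> M" "c e = c e'"
    then have "c e \<in> e \<inter> e'" using c[of e] c[of e'] by auto
    then show "e = e'" using disj \<open>e \<in> M\<close> \<open>e' \<in> M\<close> by auto
  qed
  have "card M = card (c ` M)" using card_image[OF injc] by simp
  also have "\<dots> \<le> card (X \<inter> \<Union>M)"
    by (rule card_mono) (use finX c in auto)
  finally have A: "card M \<le> card (X \<inter> \<Union>M)" .
  have QX: "card (Q - X) \<le> 1"
    using Qc by (auto simp: card_le_Suc0_iff_eq[OF finite_Diff[OF finQ]])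
  have "card Q = card (Q \<inter> X) + card (Q - X)"
    using card_Int_Diff[OF finQ] by simp
  then have B: "card Q - 1 \<le> card (X \<inter> Q)" using QX by (simp add: Int_commute)
  have "card (X \<inter> \<Union>M) + card (X \<inter> Q) = card ((X \<inter> \<Union>M) \<union> (X \<inter> Q))"
    by (rule card_Un_disjoint[symmetric]) (use finX QM in auto)
  also have "\<dots> \<le> card X" by (rule card_mono[OF finX]) auto
  finally show ?thesis using A B by linarith
qed

definition sw :: "'b \<Rightarrow> 'b \<Rightarrow> 'b \<Rightarrow> 'b" where
  "sw a b x = (if x = a then b else if x = b then a else x)"

lemma twin_aut:
  assumes "a \<in> W" "b \<in> W" and symm: "\<forall>x y. Adj x y = Adj y x" and irr: "\<forall>x. \<not> Adj x x"
    and tw: "\<forall>x\<in>W. x \<noteq> a \<longrightarrow> x \<noteq> b \<longrightarrow> Adj a x = Adj b x"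
  shows "is_aut W Adj (sw a b)"
proof -
  have "bij_betw (sw a b) W W"
    by (rule bij_betw_byWitness[where f'="sw a b"]) (use assms in \<open>auto simp: sw_def\<close>)
  moreover have "\<forall>u\<in>W. \<forall>v\<in>W. Adj u v \<longleftrightarrow> Adj (sw a b u) (sw a b v)"
  proof (intro ballI)
    fix u v assume u: "u \<in> W" and v: "v \<in> W"
    show "Adj u v \<longleftrightarrow> Adj (sw a b u) (sw a b v)"
    proof -
      have i1: "\<not> Adj a a" "\<not> Adj b b" using irr by auto
      have s1: "Adj u a = Adj a u" "Adj u b = Adj b u" "Adj a b = Adj b a" using symm by auto
      have t1: "u \<noteq> a \<Longrightarrow> u \<noteq> b \<Longrightarrow> Adj a u = Adj b u" using tw u by auto
      have t2: "v \<noteq> a \<Longrightarrow> v \<noteq> b \<Longrightarrow> Adj a v = Adj b v" using tw v by auto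
      have s2: "Adj v a = Adj a v" "Adj v b = Adj b v" using symm by auto
      show ?thesis
      proof (cases "u = a \<or> u = b")
        case uab: True
        show ?thesis
        proof (cases "v = a \<or> v = b")
          case True
          then show ?thesis using uab i1 s1 unfolding sw_def by auto
        next
          case False
          then have "sw a b v = v" unfolding sw_def by auto
          moreover have "Adj a v = Adj b v" using t2 False by auto
          ultimately show ?thesis using uab unfolding sw_def by auto
        qed
      next
        case unab: False
        then have su: "sw a b u = u" unfolding sw_def by auto
        show ?thesis
        proof (cases "v = a \<or> v = b")
          case True
          have "Adj a u = Adj b u" using t1 unab by auto
          then have "Adj u a = Adj u b" using s1 by simp
          then show ?thesis using True su unfolding sw_def by auto
        next
          case False
          then have "sw a b v = v" unfolding sw_def by auto
          then show ?thesis using su by simp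
        qed
      qed
    qed
  qed
  ultimately show ?thesis unfolding is_aut_def by simp
qed

lemma twin_fix:
  assumes "fixing_set W Adj S" "a \<in> W" "b \<in> W" "a \<noteq> b"
    and symm: "\<forall>x y. Adj x y = Adj y x" and irr: "\<forall>x. \<not> Adj x x"
    and tw: "\<forall>x\<in>W. x \<noteq> a \<longrightarrow> x \<noteq> b \<longrightarrow> Adj a x = Adj b x"
  shows "a \<in> S \<or> b \<in> S"
proof (rule ccontr)
  assume "\<not> (a \<in> S \<or> b \<in> S)"
  then have "\<forall>s\<in>S. sw a b s = s" by (auto simp: sw_def)
  moreover have "is_aut W Adj (sw a b)" using twin_aut[OF assms(2,3) symm irr tw] .
  ultimately have "\<forall>v\<in>W. sw a b v = v" using assms(1) unfolding fixing_set_def by blast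
  then show False using assms by (auto simp: sw_def)
qed



lemma FE_sym: "functigraph_E (Kn_minus M) g x y = functigraph_E (Kn_minus M) g y x"
  by (cases x; cases y) (auto simp: Kn_minus_def insert_commute)

lemma FE_irr: "\<not> functigraph_E (Kn_minus M) g x x"
  by (cases x) (auto simp: Kn_minus_def)

lemma Kn_sym: "Kn_minus M x y = Kn_minus M y x"
  by (auto simp: Kn_minus_def insert_commute)

lemma FV_cases: "x \<in> functigraph_V V \<longleftrightarrow> (\<exists>u\<in>V. x = Inl u) \<or> (\<exists>v\<in>V. x = Inr v)"
  unfolding functigraph_V_def by auto

lemma adj_other:
  assumes mat: "matching_in_Kn n M" and ab: "{a,b} \<in> M" and "x \<noteq> a" "x \<noteq> b"
  shows "Kn_minus M a x"
proof -
  have "{a,x} \<notin> M"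
  proof
    assume "{a,x} \<in> M"
    then have "{a,x} = {a,b}" using match_share[OF mat _ ab, of "{a,x}" a] by auto
    then show False using assms by (metis doubleton_eq_iff)
  qed
  then show ?thesis using assms unfolding Kn_minus_def by auto
qed

lemma sat_adj: "x \<notin> \<Union>M \<Longrightarrow> Kn_minus M x y = (x \<noteq> y)"
  unfolding Kn_minus_def by auto

lemma min_in:
  assumes "matching_in_Kn n M" "e \<in> M" shows "Min e \<in> e"
proof -
  have "card e = 2" using assms unfolding matching_in_Kn_def by auto
  then have "finite e" using card_ge_0_finite by force
  moreover have "e \<noteq> {}" using \<open>card e = 2\<close> by auto
  ultimately
  show ?thesis by (rule Min_in)
qed

lemma min_inj:
  assumes "matching_in_Kn n M" shows "inj_on Min M"
proof (rule inj_onI)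
  fix e e' assume "e \<in> M" "e' \<in> M" "Min e = Min e'"
  then show "e = e'" using match_share[OF assms] min_in[OF assms] by metis
qed

locale FG =
  fixes n w :: nat and M :: "nat set set"
  assumes n3: "n \<ge> 3" and mat: "matching_in_Kn n M" and finM: "finite M" and wn: "w < n"
begin

abbreviation "V \<equiv> {0..<n}"
abbreviation "FV \<equiv> functigraph_V V"
abbreviation "FE \<equiv> functigraph_E (Kn_minus M) (\<lambda>_. w)"
abbreviation "Sat \<equiv> V - \<Union>M"
abbreviation "Mw \<equiv> {e\<in>M. w \<notin> e}"

lemma finFV: "finite FV" unfolding functigraph_V_def by auto

lemma UM_sub: "\<Union>M \<subseteq> V" using mat unfolding matching_in_Kn_def by auto

lemma disj: "\<forall>e\<in>M. \<forall>e'\<in>M. e \<noteq> e' \<longrightarrow> e \<inter> e' = {}"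
  using mat unfolding matching_in_Kn_def by auto

lemma Inl_twin:
  assumes "\<forall>x\<in>V. x \<noteq> a \<longrightarrow> x \<noteq> b \<longrightarrow> Kn_minus M a x = Kn_minus M b x"
  shows "\<forall>x\<in>FV. x \<noteq> Inl a \<longrightarrow> x \<noteq> Inl b \<longrightarrow> FE (Inl a) x = FE (Inl b) x"
proof (intro ballI impI)
  fix x assume x: "x \<in> FV" "x \<noteq> Inl a" "x \<noteq> Inl b"
  from x(1) consider (l) u where "u\<in>V" "x = Inl u" | (r) v where "v\<in>V" "x = Inr v"
    unfolding FV_cases by blast
  then show "FE (Inl a) x = FE (Inl b) x"
  proof cases
    case l then show ?thesis using assms x by auto
  next
    case r then show ?thesis by auto
  qed
qed

lemma Inr_twin:
  assumes "\<forall>x\<in>V. x \<noteq> a \<longrightarrow> x \<noteq> b \<longrightarrow> Kn_minus M a x = Kn_minus M b x" "a \<noteq> w" "b \<noteq> w"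
  shows "\<forall>x\<in>FV. x \<noteq> Inr a \<longrightarrow> x \<noteq> Inr b \<longrightarrow> FE (Inr a) x = FE (Inr b) x"
proof (intro ballI impI)
  fix x assume x: "x \<in> FV" "x \<noteq> Inr a" "x \<noteq> Inr b"
  from x(1) consider (l) u where "u\<in>V" "x = Inl u" | (r) v where "v\<in>V" "x = Inr v"
    unfolding FV_cases by blast
  then show "FE (Inr a) x = FE (Inr b) x"
  proof cases
    case l then show ?thesis using assms by auto
  next
    case r then show ?thesis using assms x by auto
  qed
qed

lemma pair_twin:
  assumes "{a,b} \<in> M"
  shows "\<forall>x\<in>V. x \<noteq> a \<longrightarrow> x \<noteq> b \<longrightarrow> Kn_minus M a x = Kn_minus M b x"
proof -
  have "{b,a} \<in> M" using assms by (simp add: insert_commute)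
  then show ?thesis using adj_other[OF mat assms] adj_other[OF mat \<open>{b,a}\<in>M\<close>] by auto
qed

lemma sat_twin:
  assumes "a \<notin> \<Union>M" "b \<notin> \<Union>M"
  shows "\<forall>x\<in>V. x \<noteq> a \<longrightarrow> x \<noteq> b \<longrightarrow> Kn_minus M a x = Kn_minus M b x"
  using sat_adj[OF assms(1)] sat_adj[OF assms(2)] by auto

lemma lower:
  assumes S: "fixing_set FV FE S"
  shows "card M + (card Sat - 1) + (card Mw + (card (Sat - {w}) - 1)) \<le> card S"
proof -
  define X where "X = {u\<in>V. Inl u \<in> S}"
  define Y where "Y = {u\<in>V. Inr u \<in> S}"
  have symm: "\<forall>x y. FE x y = FE y x" using FE_sym by blast
  have irr: "\<forall>x. \<not> FE x x" using FE_irr by blast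
  have finS: "finite S" using S finFV unfolding fixing_set_def by (auto intro: finite_subset)
  have edge: "\<exists>a b. e = {a,b} \<and> a \<noteq> b \<and> a \<in> V \<and> b \<in> V" if "e \<in> M" for e
    using match_edge[OF mat that] by auto
  have c1: "card M + (card Sat - 1) \<le> card X"
  proof (rule count_lb)
    show "finite X" unfolding X_def by auto
    show "\<forall>e\<in>M. e \<inter> X \<noteq> {}"
    proof
      fix e assume e: "e \<in> M"
      then obtain a b where ab: "e = {a,b}" "a \<noteq> b" "a \<in> V" "b \<in> V" using edge by blast
      have "Inl a \<in> S \<or> Inl b \<in> S"
        by (rule twin_fix[OF S _ _ _ symm irr Inl_twin[OF pair_twin]]) (use ab e in \<open>auto simp: FV_cases\<close>)
      then show "e \<inter> X \<noteq> {}" using ab unfolding X_def by auto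
    qed
    show "\<forall>e\<in>M. \<forall>e'\<in>M. e \<noteq> e' \<longrightarrow> e \<inter> e' = {}" by (rule disj)
    show "finite M" by (rule finM)
    show "Sat \<inter> \<Union>M = {}" by auto
    show "finite Sat" by auto
    show "\<forall>x\<in>Sat. \<forall>y\<in>Sat. x \<noteq> y \<longrightarrow> x \<in> X \<or> y \<in> X"
    proof (intro ballI impI)
      fix x y assume x: "x \<in> Sat" and y: "y \<in> Sat" and xy: "x \<noteq> y"
      have "Inl x \<in> S \<or> Inl y \<in> S"
        by (rule twin_fix[OF S _ _ _ symm irr Inl_twin[OF sat_twin]]) (use x y xy in \<open>auto simp: FV_cases\<close>)
      then show "x \<in> X \<or> y \<in> X" using x y unfolding X_def by auto
    qed
  qed
  have c2: "card Mw + (card (Sat - {w}) - 1) \<le> card Y"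
  proof (rule count_lb)
    show "finite Y" unfolding Y_def by auto
    show "\<forall>e\<in>Mw. e \<inter> Y \<noteq> {}"
    proof
      fix e assume e: "e \<in> Mw"
      then obtain a b where ab: "e = {a,b}" "a \<noteq> b" "a \<in> V" "b \<in> V" using edge by blast
      have "a \<noteq> w" "b \<noteq> w" using e ab by auto
      have "Inr a \<in> S \<or> Inr b \<in> S"
        by (rule twin_fix[OF S _ _ _ symm irr Inr_twin[OF pair_twin \<open>a \<noteq> w\<close> \<open>b \<noteq> w\<close>]]) (use ab e in \<open>auto simp: FV_cases\<close>)
      then show "e \<inter> Y \<noteq> {}" using ab unfolding Y_def by auto
    qed
    show "\<forall>e\<in>Mw. \<forall>e'\<in>Mw. e \<noteq> e' \<longrightarrow> e \<inter> e' = {}" using disj by auto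
    show "finite Mw" using finM by auto
    show "(Sat - {w}) \<inter> \<Union>Mw = {}" by auto
    show "finite (Sat - {w})" by auto
    show "\<forall>x\<in>Sat - {w}. \<forall>y\<in>Sat - {w}. x \<noteq> y \<longrightarrow> x \<in> Y \<or> y \<in> Y"
    proof (intro ballI impI)
      fix x y assume x: "x \<in> Sat - {w}" and y: "y \<in> Sat - {w}" and xy: "x \<noteq> y"
      have "x \<noteq> w" "y \<noteq> w" using x y by auto
      have "Inr x \<in> S \<or> Inr y \<in> S"
        by (rule twin_fix[OF S _ _ _ symm irr Inr_twin[OF sat_twin \<open>x \<noteq> w\<close> \<open>y \<noteq> w\<close>]]) (use x y xy in \<open>auto simp: FV_cases\<close>)
      then show "x \<in> Y \<or> y \<in> Y" using x y unfolding Y_def by auto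
    qed
  qed
  have "card X + card Y = card (Inl ` X :: (nat+nat) set) + card (Inr ` Y :: (nat+nat) set)"
    by (simp add: card_image)
  also have "\<dots> = card (Inl ` X \<union> Inr ` Y :: (nat+nat) set)"
    by (rule card_Un_disjoint[symmetric]) (auto simp: X_def Y_def)
  also have "\<dots> \<le> card S" by (rule card_mono[OF finS]) (auto simp: X_def Y_def)
  finally show ?thesis using c1 c2 by linarith
qed

end


context FG begin

definition nb :: "nat + nat \<Rightarrow> (nat + nat) set" where
  "nb x = {y \<in> FV. FE x y}"

lemma nb_aut:
  assumes f: "is_aut FV FE f" and x: "x \<in> FV"
  shows "card (nb (f x)) = card (nb x)"
proof -
  have bij: "bij_betw f FV FV" and adj: "\<forall>u\<in>FV. \<forall>v\<in>FV. FE u v \<longleftrightarrow> FE (f u) (f v)"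
    using f unfolding is_aut_def by auto
  have "nb (f x) = f ` nb x"
  proof
    show "nb (f x) \<subseteq> f ` nb x"
    proof
      fix y assume "y \<in> nb (f x)"
      then have y: "y \<in> FV" "FE (f x) y" unfolding nb_def by auto
      then obtain z where z: "z \<in> FV" "y = f z" using bij by (metis bij_betw_imp_surj_on imageE)
      then have "FE x z" using adj x y by auto
      then show "y \<in> f ` nb x" using z unfolding nb_def by auto
    qed
    show "f ` nb x \<subseteq> nb (f x)"
    proof
      fix y assume "y \<in> f ` nb x"
      then obtain z where z: "z \<in> FV" "FE x z" "y = f z" unfolding nb_def by auto
      have "f z \<in> FV" using bij z(1) by (meson bij_betwE)
      then show "y \<in> nb (f x)" using adj x z unfolding nb_def by auto
    qed
  qed
  moreover have "inj_on f (nb x)"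
    using bij_betw_imp_inj_on[OF bij] by (rule inj_on_subset) (auto simp: nb_def)
  ultimately show ?thesis by (simp add: card_image)
qed

lemma exists_nb_w: "\<exists>t\<in>V. t \<noteq> w \<and> Kn_minus M w t"
proof -
  have "\<exists>t1 t2. t1 < n \<and> t2 < n \<and> t1 \<noteq> w \<and> t2 \<noteq> w \<and> t1 \<noteq> t2"
  proof (cases "w = 0")
    case True then show ?thesis using n3 by (intro exI[of _ 1] exI[of _ 2]) auto
  next
    case False
    show ?thesis
    proof (cases "w = 1")
      case True then show ?thesis using n3 by (intro exI[of _ 0] exI[of _ 2]) auto
    next
      case False
      then show ?thesis using n3 \<open>w \<noteq> 0\<close> by (intro exI[of _ 0] exI[of _ 1]) auto
    qed
  qed
  then obtain t1 t2 where t: "t1 < n" "t2 < n" "t1 \<noteq> w" "t2 \<noteq> w" "t1 \<noteq> t2" by blast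
  show ?thesis
  proof (rule ccontr)
    assume "\<not> ?thesis"
    then have "\<not> Kn_minus M w t1" "\<not> Kn_minus M w t2" using t by auto
    then have "{w,t1} \<in> M" "{w,t2} \<in> M" using t unfolding Kn_minus_def by auto
    then have "{w,t1} = {w,t2}" using match_share[OF mat, of "{w,t1}" "{w,t2}" w] by auto
    then show False using t by (metis doubleton_eq_iff)
  qed
qed

lemma deg_w: "n < card (nb (Inr w))"
proof -
  obtain t where t: "t \<in> V" "t \<noteq> w" "Kn_minus M w t" using exists_nb_w by blast
  have sub: "insert (Inr t) (Inl ` V) \<subseteq> nb (Inr w)"
    using t wn unfolding nb_def functigraph_V_def by auto
  have fin: "finite (nb (Inr w))" using finFV unfolding nb_def by auto
  have "card (insert (Inr t) (Inl ` V) :: (nat+nat) set) = Suc n"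
    by (subst card_insert_disjoint) (auto simp: card_image)
  then show ?thesis using card_mono[OF fin sub] by simp
qed

lemma deg_l: assumes "u \<in> V" shows "card (nb (Inl u)) \<le> n"
proof -
  have sub: "nb (Inl u) \<subseteq> insert (Inr w) (Inl ` (V - {u}))"
  proof
    fix y assume "y \<in> nb (Inl u)"
    then have y: "y \<in> FV" "FE (Inl u) y" unfolding nb_def by auto
    from y(1) consider (l) t where "t\<in>V" "y = Inl t" | (r) t where "t\<in>V" "y = Inr t"
      unfolding FV_cases by blast
    then show "y \<in> insert (Inr w) (Inl ` (V - {u}))"
    proof cases
      case l
      then have "t \<noteq> u" using y(2) by (simp add: Kn_minus_def)
      then show ?thesis using l by simp
    next
      case r then show ?thesis using y(2) by simp
    qed
  qed
  have c1: "card (insert (Inr w) (Inl ` (V - {u})) :: (nat+nat) set) \<le> Suc (card (Inl ` (V - {u}) :: (nat+nat) set))"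
    by (rule card_insert_le_m1) auto
  have c2: "card (Inl ` (V - {u}) :: (nat+nat) set) = n - 1" using assms by (simp add: card_image)
  have c3: "card (nb (Inl u)) \<le> card (insert (Inr w) (Inl ` (V - {u})) :: (nat+nat) set)"
    by (rule card_mono[OF _ sub]) simp
  show ?thesis using c1 c2 c3 n3 by linarith
qed

lemma deg_r: assumes "v \<in> V" "v \<noteq> w" shows "card (nb (Inr v)) \<le> n"
proof -
  have sub: "nb (Inr v) \<subseteq> Inr ` V"
    unfolding nb_def functigraph_V_def using assms by auto
  have "card (Inr ` V :: (nat+nat) set) = n" by (simp add: card_image)
  then show ?thesis using card_mono[OF _ sub] by fastforce
qed

lemma aut_fix_w:
  assumes f: "is_aut FV FE f" shows "f (Inr w) = Inr w"
proof -
  have wF: "Inr w \<in> FV" using wn unfolding functigraph_V_def by auto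
  have fw: "f (Inr w) \<in> FV" using f wF unfolding is_aut_def by (meson bij_betwE)
  have d: "n < card (nb (f (Inr w)))" using nb_aut[OF f wF] deg_w by simp
  from fw consider (l) u where "u\<in>V" "f (Inr w) = Inl u" | (r) v where "v\<in>V" "f (Inr w) = Inr v"
    unfolding FV_cases by blast
  then show ?thesis
  proof cases
    case l then show ?thesis using deg_l[of u] d by simp
  next
    case r then show ?thesis using deg_r[of v] d by (cases "v = w") auto
  qed
qed

lemma connect:
  assumes "u0 \<in> V" "u \<in> V"
  shows "u = u0 \<or> Kn_minus M u0 u \<or> (\<exists>t\<in>V. Kn_minus M u0 t \<and> Kn_minus M t u)"
proof (rule ccontr)
  assume H: "\<not> ?thesis"
  then have m: "{u0,u} \<in> M" "u \<noteq> u0" unfolding Kn_minus_def by auto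
  have "\<not> V \<subseteq> {u0,u}"
  proof
    assume "V \<subseteq> {u0,u}"
    then have "card V \<le> card {u0,u}" by (rule card_mono[rotated]) auto
    also have "\<dots> \<le> 2" by (simp add: card_insert_le_m1)
    finally show False using n3 by simp
  qed
  then obtain t where t0: "t \<in> V" "t \<notin> {u0,u}" by blast
  then have t: "t \<in> V" "t \<noteq> u0" "t \<noteq> u" by auto
  have "{u,u0} \<in> M" using m by (simp add: insert_commute)
  have "Kn_minus M u0 t" using adj_other[OF mat m(1)] t by auto
  moreover have "Kn_minus M u t" using adj_other[OF mat \<open>{u,u0}\<in>M\<close>] t by auto
  then have "Kn_minus M t u" using Kn_sym by metis
  ultimately show False using H t by auto
qed

lemma aut_Inl:
  assumes f: "is_aut FV FE f" and u0: "u0 \<in> V"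
  shows "\<exists>u'\<in>V. f (Inl u0) = Inl u'"
proof (rule ccontr)
  assume H: "\<not> ?thesis"
  have bij: "bij_betw f FV FV" and adj: "\<forall>u\<in>FV. \<forall>v\<in>FV. FE u v \<longleftrightarrow> FE (f u) (f v)"
    using f unfolding is_aut_def by auto
  have inj: "inj_on f FV" using bij by (rule bij_betw_imp_inj_on)
  have fw: "f (Inr w) = Inr w" by (rule aut_fix_w[OF f])
  have wF: "Inr w \<in> FV" using wn unfolding functigraph_V_def by auto
  have inF: "f x \<in> FV" if "x \<in> FV" for x using bij that by (meson bij_betwE)
  have lF: "Inl u \<in> FV" if "u \<in> V" for u using that unfolding functigraph_V_def by auto
  have notw: "f (Inl u) \<noteq> Inr w" if "u \<in> V" for u
  proof
    assume "f (Inl u) = Inr w"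
    then have "f (Inl u) = f (Inr w)" using fw by simp
    then have "Inl u = (Inr w :: nat + nat)" using inj lF[OF that] wF by (meson inj_onD)
    then show False by simp
  qed
  have step: "f (Inl u') \<in> Inr ` (V - {w})"
    if u: "u \<in> V" and u': "u' \<in> V" and e: "Kn_minus M u u'" and fu: "f (Inl u) \<in> Inr ` (V - {w})" for u u'
  proof -
    from fu obtain v where v0: "v \<in> V - {w}" "f (Inl u) = Inr v" by blast
    then have v: "v \<in> V" "v \<noteq> w" "f (Inl u) = Inr v" by auto
    have "FE (Inl u) (Inl u')" using e by simp
    then have "FE (f (Inl u)) (f (Inl u'))" using adj lF[OF u] lF[OF u'] by blast
    then have E1: "FE (Inr v) (f (Inl u'))" using v by simp
    from inF[OF lF[OF u']] consider (l) t where "t\<in>V" "f (Inl u') = Inl t" | (r) t where "t\<in>V" "f (Inl u') = Inr t"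
      unfolding FV_cases by blast
    then show ?thesis
    proof cases
      case l then show ?thesis using E1 v by simp
    next
      case r then show ?thesis using notw[OF u'] by auto
    qed
  qed
  have start: "f (Inl u0) \<in> Inr ` (V - {w})"
  proof -
    from inF[OF lF[OF u0]] H obtain v where "v \<in> V" "f (Inl u0) = Inr v"
      unfolding FV_cases by blast
    then show ?thesis using notw[OF u0] by auto
  qed
  have all: "f (Inl u) \<in> Inr ` (V - {w})" if u: "u \<in> V" for u
  proof -
    from connect[OF u0 u] consider "u = u0" | "Kn_minus M u0 u" | t where "t \<in> V" "Kn_minus M u0 t" "Kn_minus M t u"
      by blast
    then show ?thesis
    proof cases
      case 1 then show ?thesis using start by simp
    next
      case 2 then show ?thesis using step[OF u0 u _ start] by simp
    next
      case 3 then show ?thesis using step[OF u0 3(1) 3(2) start] step[OF 3(1) u 3(3)] by simp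
    qed
  qed
  have sub: "f ` (Inl ` V) \<subseteq> Inr ` (V - {w})" using all by auto
  have "inj_on f (Inl ` V)" using inj by (rule inj_on_subset) (auto simp: functigraph_V_def)
  then have "card (f ` (Inl ` V)) = n" by (simp add: card_image)
  moreover have "card (Inr ` (V - {w}) :: (nat+nat) set) = n - 1" using wn by (simp add: card_image)
  ultimately have "n \<le> n - 1" using card_mono[OF _ sub] by fastforce
  then show False using n3 by simp
qed

lemma aut_Inr:
  assumes f: "is_aut FV FE f" and v0: "v0 \<in> V"
  shows "\<exists>v'\<in>V. f (Inr v0) = Inr v'"
proof (rule ccontr)
  assume H: "\<not> ?thesis"
  have bij: "bij_betw f FV FV" using f unfolding is_aut_def by auto
  have inj: "inj_on f FV" using bij by (rule bij_betw_imp_inj_on)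
  have rF: "Inr v0 \<in> FV" using v0 unfolding functigraph_V_def by auto
  have "f (Inr v0) \<in> FV" using bij rF by (meson bij_betwE)
  with H obtain u where u: "u \<in> V" "f (Inr v0) = Inl u" unfolding FV_cases by blast
  have sub: "f ` (Inl ` V) \<subseteq> Inl ` V" using aut_Inl[OF f] by blast
  have injl: "inj_on f (Inl ` V)" using inj by (rule inj_on_subset) (auto simp: functigraph_V_def)
  have "card (f ` (Inl ` V)) = card (Inl ` V :: (nat+nat) set)" using injl by (simp add: card_image)
  then have eq: "f ` (Inl ` V) = Inl ` V" using sub by (intro card_subset_eq) auto
  have "Inl u \<in> f ` (Inl ` V)" using eq u(1) by simp
  then obtain x where x: "Inl u = f x" "x \<in> Inl ` V" by (rule imageE)
  have xF: "x \<in> FV" using x(2) unfolding functigraph_V_def by auto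
  have "f x = f (Inr v0)" using x u by simp
  then have "x = Inr v0" using inj rF xF by (meson inj_onD)
  then have "Inr v0 \<in> (Inl ` V :: (nat+nat) set)" using x(2) by simp
  then show False by auto
qed

end


lemma card_minus_some:
  assumes "finite A" shows "card (A - {SOME z. z \<in> A}) = card A - 1"
proof (cases "A = {}")
  case True then show ?thesis by simp
next
  case False
  then have "(SOME z. z \<in> A) \<in> A" by (metis ex_in_conv someI_ex)
  then show ?thesis using assms by simp
qed

context FG begin

definition "RA = Min ` M \<union> (Sat - {SOME z. z \<in> Sat})"
definition "RB = Min ` Mw \<union> ((Sat - {w}) - {SOME z. z \<in> Sat - {w}})"
definition "S0 = (Inl ` RA \<union> Inr ` RB :: (nat+nat) set)"

lemma RA_sub: "RA \<subseteq> V" unfolding RA_def using min_in[OF mat] UM_sub by auto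
lemma RB_sub: "RB \<subseteq> V" unfolding RB_def using min_in[OF mat] UM_sub by auto

lemma card_RA: "card RA = card M + (card Sat - 1)"
proof -
  have "card RA = card (Min ` M) + card (Sat - {SOME z. z \<in> Sat})"
    unfolding RA_def by (rule card_Un_disjoint) (use finM min_in[OF mat] in auto)
  also have "card (Min ` M) = card M" by (rule card_image[OF min_inj[OF mat]])
  also have "card (Sat - {SOME z. z \<in> Sat}) = card Sat - 1" by (rule card_minus_some) simp
  finally show ?thesis .
qed

lemma card_RB: "card RB = card Mw + (card (Sat - {w}) - 1)"
proof -
  have "card RB = card (Min ` Mw) + card ((Sat - {w}) - {SOME z. z \<in> Sat - {w}})"
    unfolding RB_def by (rule card_Un_disjoint) (use finM min_in[OF mat] in auto)
  also have "card (Min ` Mw) = card Mw"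
    by (rule card_image) (rule inj_on_subset[OF min_inj[OF mat]], auto)
  also have "card ((Sat - {w}) - {SOME z. z \<in> Sat - {w}}) = card (Sat - {w}) - 1"
    by (rule card_minus_some) simp
  finally show ?thesis .
qed

lemma card_S0: "card S0 = card M + (card Sat - 1) + (card Mw + (card (Sat - {w}) - 1))"
proof -
  have "card S0 = card (Inl ` RA :: (nat+nat) set) + card (Inr ` RB :: (nat+nat) set)"
    unfolding S0_def
    by (rule card_Un_disjoint) (auto intro: finite_imageI finite_subset[OF RA_sub] finite_subset[OF RB_sub])
  also have "\<dots> = card RA + card RB" by (simp add: card_image)
  finally show ?thesis using card_RA card_RB by simp
qed

lemma S0_fix: "fixing_set FV FE S0"
  unfolding fixing_set_def
proof (intro conjI allI impI)
  show "S0 \<subseteq> FV" unfolding S0_def functigraph_V_def using RA_sub RB_sub by auto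
  fix f assume H: "is_aut FV FE f \<and> (\<forall>s\<in>S0. f s = s)"
  then have f: "is_aut FV FE f" and fs: "\<forall>s\<in>S0. f s = s" by auto
  have bij: "bij_betw f FV FV" and adj: "\<forall>u\<in>FV. \<forall>v\<in>FV. FE u v \<longleftrightarrow> FE (f u) (f v)"
    using f unfolding is_aut_def by auto
  have inj: "inj_on f FV" using bij by (rule bij_betw_imp_inj_on)
  have lF: "Inl u \<in> FV" if "u \<in> V" for u using that unfolding functigraph_V_def by auto
  have rF: "Inr u \<in> FV" if "u \<in> V" for u using that unfolding functigraph_V_def by auto
  define \<phi> where "\<phi> u = projl (f (Inl u))" for u
  define \<psi> where "\<psi> u = projr (f (Inr u))" for u
  have hl: "f (Inl u) = Inl (\<phi> u) \<and> \<phi> u \<in> V" if "u \<in> V" for u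
    using aut_Inl[OF f that] unfolding \<phi>_def by auto
  have hr: "f (Inr u) = Inr (\<psi> u) \<and> \<psi> u \<in> V" if "u \<in> V" for u
    using aut_Inr[OF f that] unfolding \<psi>_def by auto
  have phi_id: "\<forall>u\<in>V. \<phi> u = u"
  proof (rule pattern_id[OF mat RA_sub])
    show "\<forall>e\<in>M. e \<inter> RA \<noteq> {}" unfolding RA_def using min_in[OF mat] by blast
    show "\<forall>x\<in>V - \<Union>M. \<forall>y\<in>V - \<Union>M. x \<notin> RA \<longrightarrow> y \<notin> RA \<longrightarrow> x = y"
      unfolding RA_def by auto
    show "\<forall>u\<in>V. \<phi> u \<in> V" using hl by auto
    show "inj_on \<phi> V"
    proof (rule inj_onI)
      fix u v assume uv: "u \<in> V" "v \<in> V" "\<phi> u = \<phi> v"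
      then have "f (Inl u) = f (Inl v)" using hl by metis
      then have "Inl u = (Inl v :: nat+nat)" using inj lF uv by (meson inj_onD)
      then show "u = v" by simp
    qed
    show "\<forall>u\<in>V. \<forall>v\<in>V. Kn_minus M u v = Kn_minus M (\<phi> u) (\<phi> v)"
    proof (intro ballI)
      fix u v assume uv: "u \<in> V" "v \<in> V"
      have "Kn_minus M u v = FE (Inl u) (Inl v)" by simp
      also have "\<dots> = FE (f (Inl u)) (f (Inl v))" using adj lF uv by blast
      also have "\<dots> = Kn_minus M (\<phi> u) (\<phi> v)" using hl uv by simp
      finally show "Kn_minus M u v = Kn_minus M (\<phi> u) (\<phi> v)" .
    qed
    show "\<forall>r\<in>RA. \<phi> r = r"
    proof
      fix r assume r: "r \<in> RA"
      then have "f (Inl r) = Inl r" using fs unfolding S0_def by auto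
      then show "\<phi> r = r" unfolding \<phi>_def by simp
    qed
  qed
  have RBw_sub: "insert w RB \<subseteq> V" using RB_sub wn by auto
  have psi_id: "\<forall>u\<in>V. \<psi> u = u"
  proof (rule pattern_id[OF mat RBw_sub])
    show "\<forall>e\<in>M. e \<inter> insert w RB \<noteq> {}"
    proof
      fix e assume e: "e \<in> M"
      show "e \<inter> insert w RB \<noteq> {}"
      proof (cases "w \<in> e")
        case True then show ?thesis by auto
      next
        case False
        then have "Min e \<in> RB" unfolding RB_def using e by auto
        then show ?thesis using min_in[OF mat e] by blast
      qed
    qed
    show "\<forall>x\<in>V - \<Union>M. \<forall>y\<in>V - \<Union>M. x \<notin> insert w RB \<longrightarrow> y \<notin> insert w RB \<longrightarrow> x = y"
      unfolding RB_def by auto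
    show "\<forall>u\<in>V. \<psi> u \<in> V" using hr by auto
    show "inj_on \<psi> V"
    proof (rule inj_onI)
      fix u v assume uv: "u \<in> V" "v \<in> V" "\<psi> u = \<psi> v"
      then have "f (Inr u) = f (Inr v)" using hr by metis
      then have "Inr u = (Inr v :: nat+nat)" using inj rF uv by (meson inj_onD)
      then show "u = v" by simp
    qed
    show "\<forall>u\<in>V. \<forall>v\<in>V. Kn_minus M u v = Kn_minus M (\<psi> u) (\<psi> v)"
    proof (intro ballI)
      fix u v assume uv: "u \<in> V" "v \<in> V"
      have "Kn_minus M u v = FE (Inr u) (Inr v)" by simp
      also have "\<dots> = FE (f (Inr u)) (f (Inr v))" using adj rF uv by blast
      also have "\<dots> = Kn_minus M (\<psi> u) (\<psi> v)" using hr uv by simp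
      finally show "Kn_minus M u v = Kn_minus M (\<psi> u) (\<psi> v)" .
    qed
    show "\<forall>r\<in>insert w RB. \<psi> r = r"
    proof
      fix r assume r: "r \<in> insert w RB"
      show "\<psi> r = r"
      proof (cases "r = w")
        case True
        then show ?thesis using aut_fix_w[OF f] unfolding \<psi>_def by simp
      next
        case False
        then have "f (Inr r) = Inr r" using fs r unfolding S0_def by auto
        then show "\<psi> r = r" unfolding \<psi>_def by simp
      qed
    qed
  qed
  show "\<forall>v\<in>FV. f v = v"
  proof
    fix x assume "x \<in> FV"
    then consider (l) u where "u\<in>V" "x = Inl u" | (r) v where "v\<in>V" "x = Inr v"
      unfolding FV_cases by blast
    then show "f x = x"
    proof cases
      case l then show ?thesis using hl phi_id by auto
    next
      case r then show ?thesis using hr psi_id by auto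
    qed
  qed
qed

lemma fix_num_eq: "fix_num FV FE = card M + (card Sat - 1) + (card Mw + (card (Sat - {w}) - 1))"
  unfolding fix_num_def
proof (rule Least_equality)
  show "\<exists>S. fixing_set FV FE S \<and> card S = card M + (card Sat - 1) + (card Mw + (card (Sat - {w}) - 1))"
    using S0_fix card_S0 by blast
  fix y assume "\<exists>S. fixing_set FV FE S \<and> card S = y"
  then show "card M + (card Sat - 1) + (card Mw + (card (Sat - {w}) - 1)) \<le> y"
    using lower by blast
qed

lemma card_UM: "card (\<Union>M) = 2 * card M"
proof -
  have fe: "\<forall>e\<in>M. finite e" using mat unfolding matching_in_Kn_def using card_ge_0_finite by fastforce
  have "card (\<Union>M) = sum card M"
    by (rule card_Union_disjoint) (use fe disj in \<open>auto simp: pairwise_def disjnt_def\<close>)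
  also have "\<dots> = sum (\<lambda>_. 2) M" using mat unfolding matching_in_Kn_def by (intro sum.cong) auto
  finally show ?thesis by simp
qed

lemma card_Sat: "card Sat = n - 2 * card M"
  using card_UM UM_sub by (simp add: card_Diff_subset finite_subset)

lemma sat_iff: "saturated V (Kn_minus M) w \<longleftrightarrow> w \<notin> \<Union>M"
proof
  assume s: "saturated V (Kn_minus M) w"
  show "w \<notin> \<Union>M"
  proof
    assume "w \<in> \<Union>M"
    then obtain e where e: "e \<in> M" "w \<in> e" by blast
    obtain a b where ab: "e = {a,b}" "a \<noteq> b" "a < n" "b < n" using match_edge[OF mat e(1)] by blast
    obtain u where u: "e = {w,u}" "u \<noteq> w" "u < n" using ab e(2) by auto
    then have "\<not> Kn_minus M w u" using e unfolding Kn_minus_def by auto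
    then show False using s u unfolding saturated_def by auto
  qed
next
  assume "w \<notin> \<Union>M"
  then show "saturated V (Kn_minus M) w" using wn sat_adj unfolding saturated_def by auto
qed

lemma Mw_card: "w \<in> \<Union>M \<Longrightarrow> card Mw = card M - 1" "w \<notin> \<Union>M \<Longrightarrow> card Mw = card M"
proof -
  assume "w \<in> \<Union>M"
  then obtain e where e: "e \<in> M" "w \<in> e" by blast
  have "Mw = M - {e}"
  proof (intro set_eqI iffI)
    fix x assume "x \<in> Mw" then show "x \<in> M - {e}" using e by auto
  next
    fix x assume x: "x \<in> M - {e}"
    have "w \<notin> x"
    proof
      assume "w \<in> x"
      then have "x = e" using match_share[OF mat _ e(1) _ e(2), of x] x by blast
      then show False using x by simp
    qed
    then show "x \<in> Mw" using x by simp
  qed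
  then show "card Mw = card M - 1" using e finM by simp
next
  assume "w \<notin> \<Union>M"
  then have "Mw = M" by auto
  then show "card Mw = card M" by simp
qed

end


theorem theorem3p6:
  fixes n i w :: nat and M :: "nat set set"
  assumes "n \<ge> 3"
    and "1 \<le> i" and "i \<le> n div 2"
    and "matching_in_Kn n M" and "finite M" and "card M = i"
    and "w < n"
  shows "(i \<le> n div 2 - 1 \<longrightarrow>
            fix_num (functigraph_V {0..<n}) (functigraph_E (Kn_minus M) (\<lambda>_. w))
              = 2 * n - 2 * i - 3)
       \<and> (even n \<and> i = n div 2 \<longrightarrow>
            fix_num (functigraph_V {0..<n}) (functigraph_E (Kn_minus M) (\<lambda>_. w)) = n - 1)
       \<and> (odd n \<and> i = n div 2 \<longrightarrow>
            fix_num (functigraph_V {0..<n}) (functigraph_E (Kn_minus M) (\<lambda>_. w))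
              = (if saturated {0..<n} (Kn_minus M) w then 2 * (n div 2) else 2 * (n div 2) - 1))"
proof -
  interpret FG n w M using assms by unfold_locales auto
  have K: "fix_num (functigraph_V {0..<n}) (functigraph_E (Kn_minus M) (\<lambda>_. w))
     = card M + (card Sat - 1) + (card Mw + (card (Sat - {w}) - 1))" by (rule fix_num_eq)
  have cs: "card Sat = n - 2 * i" using card_Sat assms by simp
  have i2: "2 * i \<le> n" using assms by linarith
  have d2: "2 * (n div 2) \<le> n" by simp
  have ev: "n = 2 * (n div 2)" if "even n" using that by simp
  have od: "n = 2 * (n div 2) + 1" if "odd n" using that by (metis odd_two_times_div_two_succ Suc_eq_plus1)
  show ?thesis
  proof (cases "w \<in> \<Union>M")
    case True
    have c1: "card Mw = i - 1" using Mw_card(1)[OF True] assms by simp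
    have c2: "card (Sat - {w}) = n - 2 * i" using True cs by simp
    have ns: "\<not> saturated {0..<n} (Kn_minus M) w" using sat_iff True by simp
    have i1: "1 \<le> i" by (rule assms(2))
    show ?thesis unfolding K c1 c2 cs assms(6) if_not_P[OF ns]
    proof (intro conjI impI)
      show "i + (n - 2 * i - 1) + (i - 1 + (n - 2 * i - 1)) = 2 * n - 2 * i - 3" if "i \<le> n div 2 - 1"
        using that i2 i1 d2 ev od by (auto; arith)
      show "i + (n - 2 * i - 1) + (i - 1 + (n - 2 * i - 1)) = n - 1" if "even n \<and> i = n div 2"
        using that i2 i1 d2 ev od by (auto; arith)
      show "i + (n - 2 * i - 1) + (i - 1 + (n - 2 * i - 1)) = 2 * (n div 2) - 1" if "odd n \<and> i = n div 2"
        using that i2 i1 d2 ev od by (auto; arith)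
    qed
  next
    case False
    have c1: "card Mw = i" using Mw_card(2)[OF False] assms by simp
    have wS: "w \<in> Sat" using False wn by simp
    have c2: "card (Sat - {w}) = n - 2 * i - 1" using wS cs by simp
    have s1: "1 \<le> n - 2 * i" using wS cs card_gt_0_iff[of Sat] by (metis One_nat_def Suc_leI empty_iff finite_Diff finite_atLeastLessThan)
    have ns: "saturated {0..<n} (Kn_minus M) w" using sat_iff False by simp
    have i1: "1 \<le> i" by (rule assms(2))
    show ?thesis unfolding K c1 c2 cs assms(6) if_P[OF ns]
    proof (intro conjI impI)
      show "i + (n - 2 * i - 1) + (i + (n - 2 * i - 1 - 1)) = 2 * n - 2 * i - 3" if "i \<le> n div 2 - 1"
        using that i2 i1 s1 d2 ev od by (auto; arith)
      show "i + (n - 2 * i - 1) + (i + (n - 2 * i - 1 - 1)) = n - 1" if "even n \<and> i = n div 2"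
        using that i2 i1 s1 d2 ev od by (auto; arith)
      show "i + (n - 2 * i - 1) + (i + (n - 2 * i - 1 - 1)) = 2 * (n div 2)" if "odd n \<and> i = n div 2"
        using that i2 i1 s1 d2 ev od by (auto; arith)
    qed
  qed
qed


end
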